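(* Let $\alpha$ be a periodic magnetic potential and $V$ a periodic electric potential on a periodic graph $\mathcal G$, and for $t\in\mathbb R$ let $H_{t\alpha}=-\Delta_{t\alpha}+V$. Then the absolutely continuous spectrum of $H_{t\alpha}$ is non-empty for all except finitely many $t\in[0,1]$.
   Context: Let $\Gamma\subset\mathbb R^d$ be a lattice with basis $\mathfrak a_1,\dots,\mathfrak a_d$. Let $\mathcal G=(\mathcal V,\mathcal E)$ be a connected, locally finite, infinite graph embedded in $\mathbb R^d$ (loops and multiple edges allowed), invariant under translations by $\Gamma$, with finite quotient $\mathcal G_*=\mathcal G/\Gamma=(\mathcal V_*,\mathcal E_* )$; $\nu=\#\mathcal V_*$. Each unoriented edge gives two oriented edges; $\mathcal A,\mathcal A_*$ are the oriented edge sets; $\underline{\mathbf e}$ is the inverse; $\varkappa_x$ is the number of oriented edges starting at $x$. Each edge $\mathbf e\in\mathcal A_*$ has an index $\tau(\mathbf e)\in\mathbb Z^d$ (the difference of the lattice coordinates, w.r.t. the basis, of the translated copies of the fundamental cell containing the terminal and initial vertices of a lift of $\mathbf e$). A periodic magnetic potential is $\alpha:\mathcal A\to\mathbb R$ with $\alpha(\underline{\mathbf e})=-\alpha(\mathbf e)$ and $\Gamma$-invariance; $V$ is a real $\Gamma$-periodic function. $H_\alpha=-\Delta_\alpha+V$ on $\ell^2(\mathcal V)$ with $\Delta_\alpha=\varkappa-A_\alpha$, $(A_\alpha f)_x=\sum_{\mathbf e=(x,y)\in\mathcal A}e^{i\alpha(\mathbf e)}f_y$, $(\varkappa f)_x=\varkappa_xf_x$.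 Fiber operators for $k\in\mathbb T^d$: $H_\alpha(k)=A_\alpha(k)-\varkappa+V$ on $\mathbb C^\nu$, $(A_\alpha(k)f)_x=\sum_{\mathbf e=(x,y)\in\mathcal A_*}e^{i(\alpha(\mathbf e)+\langle\tau(\mathbf e),k\rangle)}f_y$, eigenvalues $\lambda_{\alpha,1}(k)\le\dots\le\lambda_{\alpha,\nu}(k)$; bands $\sigma_j(H_\alpha)=\lambda_{\alpha,j}(\mathbb T^d)$. The spectrum is $\sigma(H_\alpha)=\sigma_{ac}(H_\alpha)\cup\sigma_{fb}(H_\alpha)$, where the absolutely continuous spectrum $\sigma_{ac}$ is the union of the non-degenerate bands (bands of positive length) and $\sigma_{fb}$ is the set of flat bands (eigenvalues of infinite multiplicity). *)

theory Defs
  imports Complex_Main "Jordan_Normal_Form.Char_Poly"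
begin

text \<open>
  Encoding of a Gamma-periodic graph through its finite quotient.
  Lattice coordinates are taken w.r.t. the basis a_1..a_d, so Gamma = Z^d.
  Quotient vertices: {0..<nu}.  Oriented quotient edges: the finite set E
  (of an arbitrary type 'e), with initial vertex src, terminal vertex tgt,
  inverse edge rev_e, and index tau e :: nat => int (coordinates i < d).
  A vertex of the periodic graph G is a pair (x, n) with x < nu and
  n : nat => int supported in {..<d} (lattice coordinate of the cell);
  the lift of e starting at (x,n) ends at (tgt e, n + tau e).
\<close>

definition lattice_pt :: "nat \<Rightarrow> (nat \<Rightarrow> int) \<Rightarrow> bool" where
  "lattice_pt d n \<longleftrightarrow> (\<forall>i\<ge>d. n i = 0)"

definition periodic_graph ::
  "nat \<Rightarrow> nat \<Rightarrow> 'e set \<Rightarrow> ('e \<Rightarrow> nat) \<Rightarrow> ('e \<Rightarrow> nat) \<Rightarrow> ('e \<Rightarrow> 'e)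
     \<Rightarrow> ('e \<Rightarrow> nat \<Rightarrow> int) \<Rightarrow> bool" where
  "periodic_graph d \<nu> E src tgt rev_e \<tau> \<longleftrightarrow>
     finite E \<and> \<nu> \<ge> 1 \<and>
     (\<forall>e\<in>E. src e < \<nu> \<and> tgt e < \<nu> \<and> rev_e e \<in> E \<and> rev_e e \<noteq> e \<and> rev_e (rev_e e) = e
        \<and> src (rev_e e) = tgt e \<and> tgt (rev_e e) = src e
        \<and> lattice_pt d (\<tau> e) \<and> (\<forall>i. \<tau> (rev_e e) i = - \<tau> e i))"

definition lift_adj ::
  "nat \<Rightarrow> 'e set \<Rightarrow> ('e \<Rightarrow> nat) \<Rightarrow> ('e \<Rightarrow> nat) \<Rightarrow> ('e \<Rightarrow> nat \<Rightarrow> int)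
     \<Rightarrow> nat \<times> (nat \<Rightarrow> int) \<Rightarrow> nat \<times> (nat \<Rightarrow> int) \<Rightarrow> bool" where
  "lift_adj d E src tgt \<tau> u w \<longleftrightarrow>
     (\<exists>e\<in>E. src e = fst u \<and> tgt e = fst w \<and> (\<forall>i. snd w i = snd u i + \<tau> e i))"

text \<open>G is connected (it is infinite and locally finite automatically when d >= 1).\<close>
definition lift_connected ::
  "nat \<Rightarrow> nat \<Rightarrow> 'e set \<Rightarrow> ('e \<Rightarrow> nat) \<Rightarrow> ('e \<Rightarrow> nat) \<Rightarrow> ('e \<Rightarrow> nat \<Rightarrow> int) \<Rightarrow> bool" where
  "lift_connected d \<nu> E src tgt \<tau> \<longleftrightarrow>
     (\<forall>x y n m. x < \<nu> \<longrightarrow> y < \<nu> \<longrightarrow> lattice_pt d n \<longrightarrow> lattice_pt d m \<longrightarrow>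
        (lift_adj d E src tgt \<tau>)\<^sup>*\<^sup>* (x, n) (y, m))"

definition magnetic_potential :: "'e set \<Rightarrow> ('e \<Rightarrow> 'e) \<Rightarrow> ('e \<Rightarrow> real) \<Rightarrow> bool" where
  "magnetic_potential E rev_e \<alpha> \<longleftrightarrow> (\<forall>e\<in>E. \<alpha> (rev_e e) = - \<alpha> e)"

definition degree_at :: "'e set \<Rightarrow> ('e \<Rightarrow> nat) \<Rightarrow> nat \<Rightarrow> nat" where
  "degree_at E src x = card {e\<in>E. src e = x}"

text \<open>Fiber operator H_alpha(k) = A_alpha(k) - kappa + V on C^nu.\<close>
definition fiber_op ::
  "nat \<Rightarrow> nat \<Rightarrow> 'e set \<Rightarrow> ('e \<Rightarrow> nat) \<Rightarrow> ('e \<Rightarrow> nat) \<Rightarrow> ('e \<Rightarrow> nat \<Rightarrow> int)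
     \<Rightarrow> ('e \<Rightarrow> real) \<Rightarrow> (nat \<Rightarrow> real) \<Rightarrow> (nat \<Rightarrow> real) \<Rightarrow> complex mat" where
  "fiber_op d \<nu> E src tgt \<tau> \<alpha> V k = mat \<nu> \<nu> (\<lambda>(x, y).
      (\<Sum>e\<in>{e\<in>E. src e = x \<and> tgt e = y}.
          cis (\<alpha> e + (\<Sum>i<d. real_of_int (\<tau> e i) * k i)))
      + (if x = y then complex_of_real (V x - real (degree_at E src x)) else 0))"

text \<open>j-th eigenvalue (j = 1..nu) in increasing order, counted with multiplicity.\<close>
definition fiber_eigenvalue :: "complex mat \<Rightarrow> nat \<Rightarrow> real" where
  "fiber_eigenvalue M j = sorted_list_of_multiset (image_mset Re (proots (char_poly M))) ! (j - 1)"

definition band ::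
  "nat \<Rightarrow> nat \<Rightarrow> 'e set \<Rightarrow> ('e \<Rightarrow> nat) \<Rightarrow> ('e \<Rightarrow> nat) \<Rightarrow> ('e \<Rightarrow> nat \<Rightarrow> int)
     \<Rightarrow> ('e \<Rightarrow> real) \<Rightarrow> (nat \<Rightarrow> real) \<Rightarrow> nat \<Rightarrow> real set" where
  "band d \<nu> E src tgt \<tau> \<alpha> V j =
     (\<lambda>k. fiber_eigenvalue (fiber_op d \<nu> E src tgt \<tau> \<alpha> V k) j) ` UNIV"

definition ac_spectrum ::
  "nat \<Rightarrow> nat \<Rightarrow> 'e set \<Rightarrow> ('e \<Rightarrow> nat) \<Rightarrow> ('e \<Rightarrow> nat) \<Rightarrow> ('e \<Rightarrow> nat \<Rightarrow> int)
     \<Rightarrow> ('e \<Rightarrow> real) \<Rightarrow> (nat \<Rightarrow> real) \<Rightarrow> real set" where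
  "ac_spectrum d \<nu> E src tgt \<tau> \<alpha> V =
     \<Union> {band d \<nu> E src tgt \<tau> \<alpha> V j | j. 1 \<le> j \<and> j \<le> \<nu> \<and>
          Inf (band d \<nu> E src tgt \<tau> \<alpha> V j) < Sup (band d \<nu> E src tgt \<tau> \<alpha> V j)}"

end

theory Submission
  imports Defs "Jordan_Normal_Form.Schur_Decomposition" "HOL-Complex_Analysis.Complex_Analysis"
begin

no_notation fps_nth (infixl "$" 75)
no_notation vec_nth (infixl "$" 90)

lemma exp_sum_zeros_finite:
  fixes A :: "'a set" and a :: "'a \<Rightarrow> real"
  assumes fin: "finite A" and ne: "A \<noteq> {}"
  shows "finite {t \<in> {0..1::real}. (\<Sum>p\<in>A. cis (t * a p)) = 0}"
proof (rule ccontr)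
  define Z where "Z = {t \<in> {0..1::real}. (\<Sum>p\<in>A. cis (t * a p)) = 0}"
  assume inf: "infinite {t \<in> {0..1::real}. (\<Sum>p\<in>A. cis (t * a p)) = 0}"
  define F where "F = (\<lambda>z::complex. \<Sum>p\<in>A. exp (\<i> * z * of_real (a p)))"
  have hol: "F holomorphic_on UNIV" unfolding F_def
    by (intro holomorphic_intros)
  have Fr: "F (of_real t) = (\<Sum>p\<in>A. cis (t * a p))" for t
    unfolding F_def by (intro sum.cong refl) (simp add: cis_conv_exp mult.assoc)
  have "infinite (complex_of_real ` Z)"
    using inf unfolding Z_def by (subst finite_image_iff) (auto simp: inj_on_def)
  moreover have "complex_of_real ` Z \<subseteq> complex_of_real ` {0..1}" unfolding Z_def by auto
  moreover have "compact (complex_of_real ` {0..1})"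
    by (intro compact_continuous_image continuous_intros) auto
  ultimately obtain \<xi> where "\<xi> islimpt (complex_of_real ` Z)"
    by (meson compact_eq_Bolzano_Weierstrass)
  have "F 0 = 0"
    by (rule analytic_continuation[OF hol open_UNIV connected_UNIV subset_UNIV UNIV_I \<open>\<xi> islimpt _\<close>])
       (auto simp: Z_def Fr)
  moreover have "F 0 = of_nat (card A)" unfolding F_def by simp
  ultimately show False using fin ne by simp
qed

definition mtr :: "complex mat \<Rightarrow> complex" where
  "mtr A = (\<Sum>i<dim_row A. A $$ (i,i))"

lemma mtr_comm:
  assumes A: "A \<in> carrier_mat n k" and B: "B \<in> carrier_mat k n"
  shows "mtr (A * B) = mtr (B * A)"
proof -
  have "mtr (A * B) = (\<Sum>i<n. \<Sum>j<k. A $$ (i,j) * B $$ (j,i))"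
    using A B by (auto simp: mtr_def scalar_prod_def atLeast0LessThan intro!: sum.cong)
  also have "\<dots> = (\<Sum>j<k. \<Sum>i<n. B $$ (j,i) * A $$ (i,j))"
    by (subst sum.swap) (simp add: mult.commute)
  also have "\<dots> = mtr (B * A)"
    using A B by (auto simp: mtr_def scalar_prod_def atLeast0LessThan intro!: sum.cong)
  finally show ?thesis .
qed

lemma upper_tri_mult:
  assumes X: "X \<in> carrier_mat n n" and Y: "Y \<in> carrier_mat n n"
    and uX: "upper_triangular X" and uY: "upper_triangular Y"
  shows "upper_triangular (X * Y)" "\<And>i. i < n \<Longrightarrow> (X * Y) $$ (i,i) = X $$ (i,i) * Y $$ (i,i)"
proof -
  show "upper_triangular (X * Y)"
  proof (rule upper_triangularI)
    fix i j assume j: "j < i" and i: "i < dim_row (X * Y)"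
    have "(X * Y) $$ (i,j) = (\<Sum>l \<in> {0..<n}. X $$ (i,l) * Y $$ (l,j))"
      using X Y i j by (simp add: scalar_prod_def)
    also have "\<dots> = 0"
    proof (rule sum.neutral, intro ballI)
      fix l assume l: "l \<in> {0..<n}"
      show "X $$ (i,l) * Y $$ (l,j) = 0"
      proof (cases "l < i")
        case True then show ?thesis using uX X i by (auto dest: upper_triangularD)
      next
        case False then have "j < l" using j by simp
        then show ?thesis using uY Y l by (auto dest: upper_triangularD)
      qed
    qed
    finally show "(X * Y) $$ (i,j) = 0" .
  qed
  fix i assume i: "i < n"
  have "(X * Y) $$ (i,i) = (\<Sum>l \<in> {0..<n}. X $$ (i,l) * Y $$ (l,i))"
    using X Y i by (simp add: scalar_prod_def)
  also have "\<dots> = X $$ (i,i) * Y $$ (i,i) + (\<Sum>l \<in> {0..<n} - {i}. X $$ (i,l) * Y $$ (l,i))"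
    using i by (subst sum.remove[of _ i]) auto
  also have "(\<Sum>l \<in> {0..<n} - {i}. X $$ (i,l) * Y $$ (l,i)) = 0"
  proof (rule sum.neutral, intro ballI)
    fix l assume l: "l \<in> {0..<n} - {i}"
    show "X $$ (i,l) * Y $$ (l,i) = 0"
    proof (cases "l < i")
      case True then show ?thesis using uX X i by (auto dest: upper_triangularD)
    next
      case False then have "i < l" using l by simp
      then show ?thesis using uY Y l by (auto dest: upper_triangularD)
    qed
  qed
  finally show "(X * Y) $$ (i,i) = X $$ (i,i) * Y $$ (i,i)" by simp
qed

lemma upper_tri_pow:
  assumes B: "B \<in> carrier_mat n n" and uB: "upper_triangular B"
  shows "upper_triangular (B ^\<^sub>m m) \<and> (\<forall>i<n. (B ^\<^sub>m m) $$ (i,i) = B $$ (i,i) ^ m)"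
proof (induction m)
  case 0
  then show ?case using B by auto
next
  case (Suc m)
  have P: "B ^\<^sub>m m \<in> carrier_mat n n" using B by simp
  show ?case using upper_tri_mult[OF P B] Suc uB by (auto simp: power_commutes)
qed

lemma trace_pow_roots:
  assumes A: "A \<in> carrier_mat n n" and cp: "char_poly A = (\<Prod>a\<leftarrow>as. [:-a, 1:])"
  shows "mtr (A ^\<^sub>m m) = (\<Sum>a\<leftarrow>as. a ^ m)"
proof -
  obtain B P Q where sd: "schur_decomposition A as = (B,P,Q)"
    by (cases "schur_decomposition A as") auto
  from schur_decomposition[OF A cp sd]
  have sim: "similar_mat_wit A B P Q" and uB: "upper_triangular B" and dB: "diag_mat B = as"
    by auto
  from similar_mat_witD2[OF A sim]
  have B: "B \<in> carrier_mat n n" and P: "P \<in> carrier_mat n n" and Q: "Q \<in> carrier_mat n n"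
    and QP: "Q * P = 1\<^sub>m n" by auto
  have Am: "A ^\<^sub>m m = P * B ^\<^sub>m m * Q" by (rule similar_mat_wit_pow_id[OF sim])
  have Bm: "B ^\<^sub>m m \<in> carrier_mat n n" using B by simp
  have "mtr (A ^\<^sub>m m) = mtr (P * (B ^\<^sub>m m * Q))"
    using Am P Q Bm by (simp add: assoc_mult_mat[OF P Bm Q])
  also have "\<dots> = mtr ((B ^\<^sub>m m * Q) * P)"
    by (rule mtr_comm[OF P]) (use Bm Q in auto)
  also have "(B ^\<^sub>m m * Q) * P = B ^\<^sub>m m"
    using Bm Q P QP by (simp add: assoc_mult_mat[OF Bm Q P] right_mult_one_mat[OF Bm])
  also have "mtr (B ^\<^sub>m m) = (\<Sum>i<n. B $$ (i,i) ^ m)"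
    using upper_tri_pow[OF B uB, of m] Bm unfolding mtr_def by auto
  also have "\<dots> = (\<Sum>a\<leftarrow>as. a ^ m)"
  proof -
    have "as = map (\<lambda>i. B $$ (i,i)) [0..<n]" using dB B by (auto simp: diag_mat_def)
    then have "(\<Sum>a\<leftarrow>as. a ^ m) = (\<Sum>i\<leftarrow>[0..<n]. B $$ (i,i) ^ m)" by (simp add: comp_def)
    also have "\<dots> = (\<Sum>i<n. B $$ (i,i) ^ m)"
      by (simp add: interv_sum_list_conv_sum_set_nat atLeast0LessThan)
    finally show ?thesis by simp
  qed
  finally show ?thesis .
qed

lemma proots_linear_prod: "proots (\<Prod>a\<leftarrow>as. [:-a, 1:]) = mset (as :: complex list)"
proof (induction as)
  case Nil then show ?case by simp
next
  case (Cons a as)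
  have ne: "(\<Prod>a\<leftarrow>as. [:-a, 1:]) \<noteq> (0 :: complex poly)"
    by (auto simp: prod_list_zero_iff)
  have "proots ([:-a, 1:] * (\<Prod>a\<leftarrow>as. [:-a, 1:])) = proots [:-a, 1:] + proots (\<Prod>a\<leftarrow>as. [:-a, 1:])"
    by (rule proots_mult) (use ne in auto)
  also have "proots [:-a, 1:] = {#a#}" using proots_linear_factor[of "-a"] by simp
  finally show ?case using Cons by simp
qed

lemma root_eigvec:
  fixes A :: "complex mat"
  assumes A: "A \<in> carrier_mat n n" and r: "poly (char_poly A) r = 0"
  obtains v where "v \<in> carrier_vec n" "v \<noteq> 0\<^sub>v n"
    "\<And>i. i < n \<Longrightarrow> (\<Sum>j<n. A $$ (i,j) * v $ j) = r * v $ i"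
proof -
  from r eigenvalue_root_char_poly[OF A] obtain v where ev: "eigenvector A v r"
    unfolding eigenvalue_def by auto
  then have v: "v \<in> carrier_vec n" and v0: "v \<noteq> 0\<^sub>v n" and Av: "A *\<^sub>v v = r \<cdot>\<^sub>v v"
    using A unfolding eigenvector_def by auto
  have "(\<Sum>j<n. A $$ (i,j) * v $ j) = r * v $ i" if i: "i < n" for i
  proof -
    have "(A *\<^sub>v v) $ i = (\<Sum>j<n. A $$ (i,j) * v $ j)"
      using A v i by (auto simp: scalar_prod_def atLeast0LessThan intro!: sum.cong)
    then show ?thesis using Av i v by simp
  qed
  then show ?thesis using that v v0 by blast
qed

lemma vec_nonzero_ex:
  assumes "v \<in> carrier_vec n" "v \<noteq> 0\<^sub>v n"
  shows "\<exists>i<n. v $ i \<noteq> 0"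
proof (rule ccontr)
  assume "\<not> ?thesis"
  then have "v = 0\<^sub>v n" using assms(1) by (intro eq_vecI) auto
  with assms(2) show False by simp
qed

lemma hermitian_root_real:
  fixes A :: "complex mat"
  assumes A: "A \<in> carrier_mat n n"
    and herm: "\<And>i j. i < n \<Longrightarrow> j < n \<Longrightarrow> A $$ (j,i) = cnj (A $$ (i,j))"
    and r: "poly (char_poly A) r = 0"
  shows "Im r = 0"
proof -
  obtain v where v: "v \<in> carrier_vec n" and v0: "v \<noteq> 0\<^sub>v n"
    and ev: "\<And>i. i < n \<Longrightarrow> (\<Sum>j<n. A $$ (i,j) * v $ j) = r * v $ i"
    using root_eigvec[OF A r] by blast
  define S where "S = (\<Sum>i<n. cnj (v $ i) * (\<Sum>j<n. A $$ (i,j) * v $ j))"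
  define N where "N = (\<Sum>i<n. cnj (v $ i) * v $ i)"
  have SN: "S = r * N" unfolding S_def N_def using ev
    by (auto simp: sum_distrib_left intro!: sum.cong)
  have "cnj S = (\<Sum>i<n. \<Sum>j<n. v $ i * cnj (A $$ (i,j)) * cnj (v $ j))"
    unfolding S_def by (simp add: sum_distrib_left mult.assoc)
  also have "\<dots> = (\<Sum>i<n. \<Sum>j<n. v $ i * A $$ (j,i) * cnj (v $ j))"
  proof -
    have h: "cnj (A $$ (i,j)) = A $$ (j,i)" if "i < n" "j < n" for i j using herm[OF that] by simp
    show ?thesis by (intro sum.cong refl) (simp add: h)
  qed
  also have "\<dots> = (\<Sum>j<n. \<Sum>i<n. cnj (v $ j) * (A $$ (j,i) * v $ i))"
    by (subst sum.swap) (auto intro!: sum.cong simp: mult_ac)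
  also have "\<dots> = S" unfolding S_def by (simp add: sum_distrib_left)
  finally have "Im S = 0" by (metis cnj.simps(2) neg_equal_zero)
  have Nr: "N = of_real (\<Sum>i<n. (cmod (v $ i))^2)"
    unfolding N_def of_real_sum by (intro sum.cong refl) (metis complex_norm_square mult.commute of_real_power)
  obtain i where "i < n" "v $ i \<noteq> 0" using vec_nonzero_ex[OF v v0] by blast
  then have "(\<Sum>i<n. (cmod (v $ i))^2) > 0"
    by (intro sum_pos2[of _ i]) auto
  then have "Re N > 0" "Im N = 0" using Nr by auto
  with \<open>Im S = 0\<close> SN show "Im r = 0"
    by simp
qed

lemma root_bound:
  fixes A :: "complex mat"
  assumes A: "A \<in> carrier_mat n n" and r: "poly (char_poly A) r = 0"
    and R: "\<And>i. i < n \<Longrightarrow> (\<Sum>j<n. cmod (A $$ (i,j))) \<le> R"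
  shows "cmod r \<le> R"
proof -
  obtain v where v: "v \<in> carrier_vec n" and v0: "v \<noteq> 0\<^sub>v n"
    and ev: "\<And>i. i < n \<Longrightarrow> (\<Sum>j<n. A $$ (i,j) * v $ j) = r * v $ i"
    using root_eigvec[OF A r] by blast
  obtain i0 where i0: "i0 < n" "v $ i0 \<noteq> 0" using vec_nonzero_ex[OF v v0] by blast
  define M where "M = Max ((\<lambda>j. cmod (v $ j)) ` {..<n})"
  have Mge: "cmod (v $ j) \<le> M" if "j < n" for j unfolding M_def using that by (intro Max_ge) auto
  obtain i where i: "i < n" "M = cmod (v $ i)"
    unfolding M_def using i0 Max_in[of "(\<lambda>j. cmod (v $ j)) ` {..<n}"] by fastforce
  have Mpos: "M > 0" using Mge[OF i0(1)] i0 by (smt (verit) zero_less_norm_iff)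
  have "cmod r * M = cmod (\<Sum>j<n. A $$ (i,j) * v $ j)" using ev[OF i(1)] i by (simp add: norm_mult)
  also have "\<dots> \<le> (\<Sum>j<n. cmod (A $$ (i,j)) * cmod (v $ j))"
    by (rule order.trans[OF norm_sum]) (simp add: norm_mult)
  also have "\<dots> \<le> (\<Sum>j<n. cmod (A $$ (i,j)) * M)"
    by (intro sum_mono mult_left_mono Mge) auto
  also have "\<dots> \<le> R * M" using R[OF i(1)] Mpos by (simp add: sum_distrib_right[symmetric])
  finally show ?thesis using Mpos by simp
qed

lemma char_poly_data:
  fixes A :: "complex mat"
  assumes A: "A \<in> carrier_mat n n"
    and herm: "\<And>i j. i < n \<Longrightarrow> j < n \<Longrightarrow> A $$ (j,i) = cnj (A $$ (i,j))"
    and bnd: "\<And>i. i < n \<Longrightarrow> (\<Sum>j<n. cmod (A $$ (i,j))) \<le> R"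
  shows "\<exists>as. char_poly A = (\<Prod>a\<leftarrow>as. [:-a, 1:]) \<and> length as = n \<and>
    (\<forall>a \<in> set as. Im a = 0 \<and> cmod a \<le> R) \<and>
    (\<forall>j. fiber_eigenvalue A j = sorted_list_of_multiset (mset (map Re as)) ! (j - 1))"
proof -
  obtain as where cp: "char_poly A = (\<Prod>a\<leftarrow>as. [:-a, 1:])" and len: "length as = n"
    using char_poly_factorized[OF A] by blast
  have pr: "proots (char_poly A) = mset as" using cp proots_linear_prod by simp
  have nz: "char_poly A \<noteq> 0" using degree_monic_char_poly[OF A] by auto
  have root: "poly (char_poly A) a = 0" if "a \<in> set as" for a
  proof -
    have "a \<in># proots (char_poly A)" using pr that by simp
    then show ?thesis using set_count_proots[OF nz] by blast
  qed
  have "Im a = 0 \<and> cmod a \<le> R" if "a \<in> set as" for a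
    using hermitian_root_real[OF A herm root[OF that]] root_bound[OF A root[OF that] bnd] by blast
  moreover have "fiber_eigenvalue A j = sorted_list_of_multiset (mset (map Re as)) ! (j - 1)" for j
    unfolding fiber_eigenvalue_def pr by simp
  ultimately show ?thesis using cp len by blast
qed

lemma flat_trace_const:
  fixes Mk :: "'k \<Rightarrow> complex mat"
  assumes car: "\<And>k. Mk k \<in> carrier_mat n n"
    and herm: "\<And>k i j. i < n \<Longrightarrow> j < n \<Longrightarrow> Mk k $$ (j,i) = cnj (Mk k $$ (i,j))"
    and bnd: "\<And>k i. i < n \<Longrightarrow> (\<Sum>j<n. cmod (Mk k $$ (i,j))) \<le> R"
    and flat: "\<And>j. 1 \<le> j \<Longrightarrow> j \<le> n \<Longrightarrow>
      \<not> (Inf ((\<lambda>k. fiber_eigenvalue (Mk k) j) ` UNIV) < Sup ((\<lambda>k. fiber_eigenvalue (Mk k) j) ` UNIV))"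
  shows "mtr (Mk k ^\<^sub>m m) = mtr (Mk k' ^\<^sub>m m)"
proof -
  define AS where "AS = (\<lambda>k. SOME as. char_poly (Mk k) = (\<Prod>a\<leftarrow>as. [:-a, 1:]) \<and> length as = n \<and>
    (\<forall>a \<in> set as. Im a = 0 \<and> cmod a \<le> R) \<and>
    (\<forall>j. fiber_eigenvalue (Mk k) j = sorted_list_of_multiset (mset (map Re as)) ! (j - 1)))"
  have AS: "char_poly (Mk k) = (\<Prod>a\<leftarrow>AS k. [:-a, 1:]) \<and> length (AS k) = n \<and>
    (\<forall>a \<in> set (AS k). Im a = 0 \<and> cmod a \<le> R) \<and>
    (\<forall>j. fiber_eigenvalue (Mk k) j = sorted_list_of_multiset (mset (map Re (AS k))) ! (j - 1))" for k
    unfolding AS_def by (rule someI_ex[OF char_poly_data[OF car[of k] herm[where k=k] bnd[where k=k]]])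
  define L where "L = (\<lambda>k. sorted_list_of_multiset (mset (map Re (AS k))))"
  have lenL: "length (L k) = n" for k
  proof -
    have "length (L k) = size (mset (L k))" by simp
    also have "\<dots> = n" unfolding L_def using AS[of k] by simp
    finally show ?thesis .
  qed
  have Lbnd: "\<bar>L k ! i\<bar> \<le> R" if "i < n" for k i
  proof -
    have "L k ! i \<in> set (L k)" using lenL that by simp
    then have "L k ! i \<in> Re ` set (AS k)" unfolding L_def by simp
    then obtain a where "a \<in> set (AS k)" "L k ! i = Re a" by blast
    then show ?thesis using AS[of k] abs_Re_le_cmod by (smt (verit))
  qed
  have Leq: "L k1 ! i = L k2 ! i" if i: "i < n" for k1 k2 i
  proof -
    define B where "B = (\<lambda>k. fiber_eigenvalue (Mk k) (Suc i)) ` UNIV"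
    have Bv: "fiber_eigenvalue (Mk k) (Suc i) = L k ! i" for k using AS[of k] unfolding L_def by simp
    have bdd: "bdd_above B" "bdd_below B" unfolding B_def Bv
      using Lbnd[OF i] by (auto intro!: bdd_aboveI[of _ R] bdd_belowI[of _ "-R"] simp: abs_le_iff) (smt (verit))
    have ni: "\<not> (Inf B < Sup B)" unfolding B_def using flat[of "Suc i"] i by simp
    have "Inf B \<le> L k ! i" "L k ! i \<le> Sup B" for k
      using cInf_lower[OF _ bdd(2)] cSup_upper[OF _ bdd(1)] unfolding B_def Bv by auto
    then show ?thesis using ni by (smt (verit))
  qed
  have "L k = L k'" by (rule nth_equalityI) (use lenL Leq in auto)
  then have "mset (map Re (AS k)) = mset (map Re (AS k'))" unfolding L_def
    by (metis mset_sorted_list_of_multiset)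
  then have "image_mset complex_of_real (mset (map Re (AS k))) = image_mset complex_of_real (mset (map Re (AS k')))"
    by simp
  then have "image_mset (\<lambda>x. complex_of_real (Re x)) (mset (AS k)) = image_mset (\<lambda>x. complex_of_real (Re x)) (mset (AS k'))"
    by (simp add: multiset.map_comp comp_def)
  moreover have "image_mset (\<lambda>x. complex_of_real (Re x)) (mset (AS k)) = mset (AS k)" for k
  proof -
    have "image_mset (\<lambda>x. complex_of_real (Re x)) (mset (AS k)) = image_mset id (mset (AS k))"
      by (intro image_mset_cong) (use AS[of k] in \<open>auto simp: complex_eq_iff\<close>)
    then show ?thesis by simp
  qed
  ultimately have ms: "mset (AS k) = mset (AS k')" by simp
  have "mtr (Mk k ^\<^sub>m m) = (\<Sum>a\<leftarrow>AS k. a ^ m)" using trace_pow_roots[OF car] AS by blast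
  also have "\<dots> = (\<Sum>a\<in>#mset (AS k). a ^ m)" by (simp flip: sum_mset_sum_list mset_map)
  also have "\<dots> = (\<Sum>a\<in>#mset (AS k'). a ^ m)" using ms by simp
  also have "\<dots> = (\<Sum>a\<leftarrow>AS k'. a ^ m)" by (simp flip: sum_mset_sum_list mset_map)
  also have "\<dots> = mtr (Mk k' ^\<^sub>m m)" using trace_pow_roots[OF car] AS by metis
  finally show ?thesis .
qed

fun chain :: "('q \<Rightarrow> nat) \<Rightarrow> ('q \<Rightarrow> nat) \<Rightarrow> nat \<Rightarrow> 'q list \<Rightarrow> nat \<Rightarrow> bool" where
  "chain sr tg x [] y = (x = y)"
| "chain sr tg x (q # qs) y = (sr q = x \<and> chain sr tg (tg q) qs y)"

definition Ls :: "'q set \<Rightarrow> nat \<Rightarrow> 'q list set" where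
  "Ls S n = {qs. set qs \<subseteq> S \<and> length qs = n}"

lemma finite_Ls: "finite S \<Longrightarrow> finite (Ls S n)"
  unfolding Ls_def by (rule finite_lists_length_eq)

lemma chain_snoc: "chain sr tg x (qs @ [q]) y \<longleftrightarrow> chain sr tg x qs (sr q) \<and> tg q = y"
  by (induction qs arbitrary: x) auto

lemma Ls_Suc: "Ls S (Suc k) = (\<lambda>(qs, q). qs @ [q]) ` (Ls S k \<times> S)"
proof
  show "Ls S (Suc k) \<subseteq> (\<lambda>(qs, q). qs @ [q]) ` (Ls S k \<times> S)"
  proof
    fix qs' assume a: "qs' \<in> Ls S (Suc k)"
    then have ne: "qs' \<noteq> []" unfolding Ls_def by auto
    then have eq: "qs' = butlast qs' @ [last qs']" by simp
    have "butlast qs' \<in> Ls S k" "last qs' \<in> S" using a ne unfolding Ls_def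
      by (auto dest: in_set_butlastD)
    then show "qs' \<in> (\<lambda>(qs, q). qs @ [q]) ` (Ls S k \<times> S)"
      using eq by (intro image_eqI[of _ _ "(butlast qs', last qs')"]) auto
  qed
  show "(\<lambda>(qs, q). qs @ [q]) ` (Ls S k \<times> S) \<subseteq> Ls S (Suc k)"
    unfolding Ls_def by auto
qed

lemma pow_walks:
  fixes M :: "complex mat" and w :: "'q \<Rightarrow> complex"
  assumes M: "M \<in> carrier_mat n n" and fin: "finite S"
    and ent: "\<And>x y. x < n \<Longrightarrow> y < n \<Longrightarrow> M $$ (x,y) = (\<Sum>q\<in>S. if sr q = x \<and> tg q = y then w q else 0)"
    and rng: "\<And>q. q \<in> S \<Longrightarrow> sr q < n \<and> tg q < n"
  shows "x < n \<Longrightarrow> y < n \<Longrightarrow>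
    (M ^\<^sub>m k) $$ (x,y) = (\<Sum>qs\<in>Ls S k. if chain sr tg x qs y then prod_list (map w qs) else 0)"
proof (induction k arbitrary: y)
  case 0
  have "Ls S 0 = {[]}" unfolding Ls_def by auto
  then show ?case using M 0 by auto
next
  case (Suc k)
  let ?L = "Ls S k"
  let ?p = "\<lambda>qs. prod_list (map w qs)"
  have Mk: "M ^\<^sub>m k \<in> carrier_mat n n" using M by simp
  have "(M ^\<^sub>m Suc k) $$ (x,y) = (\<Sum>z<n. (M ^\<^sub>m k) $$ (x,z) * M $$ (z,y))"
    using Mk M Suc.prems by (auto simp: scalar_prod_def atLeast0LessThan intro!: sum.cong)
  also have "\<dots> = (\<Sum>z<n. (\<Sum>qs\<in>?L. if chain sr tg x qs z then ?p qs else 0) *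
                      (\<Sum>q\<in>S. if sr q = z \<and> tg q = y then w q else 0))"
    using Suc by (auto intro!: sum.cong simp: ent)
  also have "\<dots> = (\<Sum>z<n. \<Sum>qs\<in>?L. \<Sum>q\<in>S.
      (if chain sr tg x qs z \<and> sr q = z \<and> tg q = y then ?p qs * w q else 0))"
    by (simp add: sum_product) (intro sum.cong refl, auto)
  also have "\<dots> = (\<Sum>qs\<in>?L. \<Sum>q\<in>S. \<Sum>z<n.
      (if chain sr tg x qs z \<and> sr q = z \<and> tg q = y then ?p qs * w q else 0))"
    by (subst sum.swap) (simp add: sum.swap[of _ "{..<n}"])
  also have "\<dots> = (\<Sum>qs\<in>?L. \<Sum>q\<in>S.
      (if chain sr tg x qs (sr q) \<and> tg q = y then ?p qs * w q else 0))"
  proof (intro sum.cong refl)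
    fix qs q assume q: "q \<in> S"
    have "(\<Sum>z<n. (if chain sr tg x qs z \<and> sr q = z \<and> tg q = y then ?p qs * w q else 0))
      = (\<Sum>z<n. (if z = sr q then (if chain sr tg x qs (sr q) \<and> tg q = y then ?p qs * w q else 0) else 0))"
      by (intro sum.cong refl) auto
    also have "\<dots> = (if chain sr tg x qs (sr q) \<and> tg q = y then ?p qs * w q else 0)"
      using rng[OF q] by (subst sum.delta) auto
    finally show "(\<Sum>z<n. (if chain sr tg x qs z \<and> sr q = z \<and> tg q = y then ?p qs * w q else 0))
      = (if chain sr tg x qs (sr q) \<and> tg q = y then ?p qs * w q else 0)" .
  qed
  also have "\<dots> = (\<Sum>(qs,q)\<in>?L \<times> S. if chain sr tg x (qs @ [q]) y then ?p (qs @ [q]) else 0)"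
    by (simp add: sum.cartesian_product chain_snoc) (intro sum.cong refl, auto)
  also have "\<dots> = (\<Sum>qs'\<in>Ls S (Suc k). if chain sr tg x qs' y then ?p qs' else 0)"
    unfolding Ls_Suc
    by (subst sum.reindex) (auto simp: inj_on_def case_prod_beta intro!: sum.cong)
  finally show ?case .
qed

lemma trace_walks:
  fixes M :: "complex mat" and w :: "'q \<Rightarrow> complex"
  assumes M: "M \<in> carrier_mat n n" and fin: "finite S"
    and ent: "\<And>x y. x < n \<Longrightarrow> y < n \<Longrightarrow> M $$ (x,y) = (\<Sum>q\<in>S. if sr q = x \<and> tg q = y then w q else 0)"
    and rng: "\<And>q. q \<in> S \<Longrightarrow> sr q < n \<and> tg q < n"
  shows "(\<Sum>x<n. (M ^\<^sub>m k) $$ (x,x)) = (\<Sum>x<n. \<Sum>qs\<in>Ls S k. if chain sr tg x qs x then prod_list (map w qs) else 0)"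
  using pow_walks[OF assms] by simp

lemma chain_filter:
  assumes "\<And>q. \<not> P q \<Longrightarrow> sr q = tg q"
  shows "chain sr tg x qs y \<Longrightarrow> chain sr tg x (filter P qs) y"
  by (induction qs arbitrary: x) (auto simp: assms)

lemma fiber_entry_raw:
  "x < \<nu> \<Longrightarrow> y < \<nu> \<Longrightarrow> fiber_op d \<nu> E src tgt \<tau> a V k $$ (x,y) =
     (\<Sum>e\<in>{e\<in>E. src e = x \<and> tgt e = y}. cis (a e + (\<Sum>i<d. real_of_int (\<tau> e i) * k i)))
      + (if x = y then complex_of_real (V x - real (degree_at E src x)) else 0)"
  unfolding fiber_op_def by simp

lemma fiber_herm:
  assumes pg: "periodic_graph d \<nu> E src tgt rev_e \<tau>"
    and ma: "\<And>e. e \<in> E \<Longrightarrow> a (rev_e e) = - a e"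
    and i: "i < \<nu>" and j: "j < \<nu>"
  shows "fiber_op d \<nu> E src tgt \<tau> a V k $$ (j,i) = cnj (fiber_op d \<nu> E src tgt \<tau> a V k $$ (i,j))"
proof -
  have E: "\<And>e. e \<in> E \<Longrightarrow> rev_e e \<in> E \<and> rev_e (rev_e e) = e \<and> src (rev_e e) = tgt e \<and> tgt (rev_e e) = src e
      \<and> (\<forall>l. \<tau> (rev_e e) l = - \<tau> e l)"
    using pg unfolding periodic_graph_def by blast
  define \<phi> where "\<phi> = (\<lambda>e. a e + (\<Sum>l<d. real_of_int (\<tau> e l) * k l))"
  have phr: "\<phi> (rev_e e) = - \<phi> e" if "e \<in> E" for e
    using E[OF that] ma[OF that] unfolding \<phi>_def by (simp add: sum_negf)
  have bij: "bij_betw rev_e {e\<in>E. src e = i \<and> tgt e = j} {e\<in>E. src e = j \<and> tgt e = i}"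
    by (rule bij_betw_byWitness[where f' = rev_e]) (use E in \<open>auto intro!: image_eqI\<close>)
  have "(\<Sum>e\<in>{e\<in>E. src e = j \<and> tgt e = i}. cis (\<phi> e)) = (\<Sum>e\<in>{e\<in>E. src e = i \<and> tgt e = j}. cis (\<phi> (rev_e e)))"
    using sum.reindex_bij_betw[OF bij, of "\<lambda>e. cis (\<phi> e)"] by simp
  also have "\<dots> = (\<Sum>e\<in>{e\<in>E. src e = i \<and> tgt e = j}. cnj (cis (\<phi> e)))"
    by (intro sum.cong refl) (simp add: phr cis_cnj)
  also have "\<dots> = cnj (\<Sum>e\<in>{e\<in>E. src e = i \<and> tgt e = j}. cis (\<phi> e))" by (simp add: cnj_sum)
  finally have key: "(\<Sum>e\<in>{e\<in>E. src e = j \<and> tgt e = i}. cis (\<phi> e)) = cnj (\<Sum>e\<in>{e\<in>E. src e = i \<and> tgt e = j}. cis (\<phi> e))" .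
  have r1: "fiber_op d \<nu> E src tgt \<tau> a V k $$ (j,i) = (\<Sum>e\<in>{e\<in>E. src e = j \<and> tgt e = i}. cis (\<phi> e))
      + (if j = i then complex_of_real (V j - real (degree_at E src j)) else 0)"
    unfolding \<phi>_def by (rule fiber_entry_raw[OF j i])
  have r2: "fiber_op d \<nu> E src tgt \<tau> a V k $$ (i,j) = (\<Sum>e\<in>{e\<in>E. src e = i \<and> tgt e = j}. cis (\<phi> e))
      + (if i = j then complex_of_real (V i - real (degree_at E src i)) else 0)"
    unfolding \<phi>_def by (rule fiber_entry_raw[OF i j])
  show ?thesis unfolding r1 r2 key by (simp only: complex_cnj_add) (auto simp del: of_real_diff)
qed

lemma fiber_bnd:
  assumes pg: "periodic_graph d \<nu> E src tgt rev_e \<tau>" and i: "i < \<nu>"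
  shows "(\<Sum>j<\<nu>. cmod (fiber_op d \<nu> E src tgt \<tau> a V k $$ (i,j))) \<le> real \<nu> * (2 * real (card E) + (\<Sum>x<\<nu>. \<bar>V x\<bar>))"
proof -
  have fin: "finite E" using pg unfolding periodic_graph_def by blast
  have "cmod (fiber_op d \<nu> E src tgt \<tau> a V k $$ (i,j)) \<le> 2 * real (card E) + (\<Sum>x<\<nu>. \<bar>V x\<bar>)" if j: "j < \<nu>" for j
  proof -
    let ?F = "{e\<in>E. src e = i \<and> tgt e = j}"
    have c1: "cmod (\<Sum>e\<in>?F. cis (a e + (\<Sum>l<d. real_of_int (\<tau> e l) * k l))) \<le> real (card E)"
    proof -
      have "cmod (\<Sum>e\<in>?F. cis (a e + (\<Sum>l<d. real_of_int (\<tau> e l) * k l))) \<le> (\<Sum>e\<in>?F. 1)"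
        by (rule order.trans[OF norm_sum]) simp
      also have "\<dots> = real (card ?F)" by simp
      also have "\<dots> \<le> real (card E)" using fin by (intro of_nat_mono card_mono) auto
      finally show ?thesis .
    qed
    have dg: "real (degree_at E src i) \<le> real (card E)"
      unfolding degree_at_def using fin by (intro of_nat_mono card_mono) auto
    have vi: "\<bar>V i\<bar> \<le> (\<Sum>x<\<nu>. \<bar>V x\<bar>)" using i by (intro member_le_sum) auto
    define D where "D = V i - real (degree_at E src i)"
    have "\<bar>D\<bar> \<le> real (card E) + (\<Sum>x<\<nu>. \<bar>V x\<bar>)" unfolding D_def using dg vi by linarith
    then have c2: "cmod (if i = j then complex_of_real (V i - real (degree_at E src i)) else 0) \<le> real (card E) + (\<Sum>x<\<nu>. \<bar>V x\<bar>)"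
      unfolding D_def[symmetric] by (cases "i = j") auto
    show ?thesis unfolding fiber_entry_raw[OF i j]
      by (rule order.trans[OF norm_triangle_ineq]) (use c1 c2 in simp)
  qed
  then have "(\<Sum>j<\<nu>. cmod (fiber_op d \<nu> E src tgt \<tau> a V k $$ (i,j))) \<le> (\<Sum>j<\<nu>. 2 * real (card E) + (\<Sum>x<\<nu>. \<bar>V x\<bar>))"
    by (intro sum_mono) auto
  then show ?thesis by simp
qed

definition ssrc :: "('e \<Rightarrow> nat) \<Rightarrow> 'e + nat \<Rightarrow> nat" where
  "ssrc src q = (case q of Inl e \<Rightarrow> src e | Inr x \<Rightarrow> x)"
definition stgt :: "('e \<Rightarrow> nat) \<Rightarrow> 'e + nat \<Rightarrow> nat" where
  "stgt tgt q = (case q of Inl e \<Rightarrow> tgt e | Inr x \<Rightarrow> x)"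
definition Steps :: "'e set \<Rightarrow> nat \<Rightarrow> ('e + nat) set" where
  "Steps E \<nu> = Inl ` E \<union> Inr ` {..<\<nu>}"
definition fq :: "('e \<Rightarrow> nat \<Rightarrow> int) \<Rightarrow> 'e + nat \<Rightarrow> int" where
  "fq \<tau> q = (case q of Inl e \<Rightarrow> \<tau> e 0 | Inr x \<Rightarrow> 0)"
definition fr :: "('e \<Rightarrow> nat \<Rightarrow> int) \<Rightarrow> ('e + nat) list \<Rightarrow> int" where
  "fr \<tau> qs = sum_list (map (fq \<tau>) qs)"
definition wT :: "('e \<Rightarrow> real) \<Rightarrow> 'e set \<Rightarrow> ('e \<Rightarrow> nat) \<Rightarrow> (nat \<Rightarrow> real) \<Rightarrow> real \<Rightarrow> 'e + nat \<Rightarrow> complex" where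
  "wT \<alpha> E src V t q = (case q of Inl e \<Rightarrow> cis (t * \<alpha> e)
      | Inr x \<Rightarrow> complex_of_real (V x - real (degree_at E src x)))"
definition aa :: "('e \<Rightarrow> real) \<Rightarrow> ('e + nat) list \<Rightarrow> real" where
  "aa \<alpha> qs = sum_list (map (\<lambda>q. case q of Inl e \<Rightarrow> \<alpha> e | Inr x \<Rightarrow> 0) qs)"

lemma ssrc_simps[simp]: "ssrc src (Inl e) = src e" "ssrc src (Inr x) = x"
  by (simp_all add: ssrc_def)
lemma stgt_simps[simp]: "stgt tgt (Inl e) = tgt e" "stgt tgt (Inr x) = x"
  by (simp_all add: stgt_def)

lemma finite_Steps: "finite E \<Longrightarrow> finite (Steps E \<nu>)"
  unfolding Steps_def by auto

lemma fiber_entry_steps: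
  assumes fin: "finite E" and d: "d \<ge> 1" and x: "x < \<nu>" and y: "y < \<nu>"
  shows "fiber_op d \<nu> E src tgt \<tau> (\<lambda>e. t * \<alpha> e) V (\<lambda>i. if i = 0 then s else 0) $$ (x,y) =
    (\<Sum>q\<in>Steps E \<nu>. if ssrc src q = x \<and> stgt tgt q = y then wT \<alpha> E src V t q * cis (s * of_int (fq \<tau> q)) else 0)"
proof -
  let ?w = "\<lambda>q. wT \<alpha> E src V t q * cis (s * of_int (fq \<tau> q))"
  let ?g = "\<lambda>q. if ssrc src q = x \<and> stgt tgt q = y then ?w q else 0"
  have ks: "(\<Sum>i<d. real_of_int (\<tau> e i) * (if i = 0 then s else 0)) = s * of_int (\<tau> e 0)" for e
  proof -
    have "(\<Sum>i<d. real_of_int (\<tau> e i) * (if i = 0 then s else 0)) = (\<Sum>i<d. if i = 0 then real_of_int (\<tau> e 0) * s else 0)"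
      by (intro sum.cong refl) auto
    also have "\<dots> = real_of_int (\<tau> e 0) * s" using d by (subst sum.delta) auto
    finally show ?thesis by simp
  qed
  have "(\<Sum>q\<in>Steps E \<nu>. ?g q) = (\<Sum>q\<in>Inl ` E. ?g q) + (\<Sum>q\<in>Inr ` {..<\<nu>}. ?g q)"
    unfolding Steps_def using fin by (intro sum.union_disjoint) auto
  also have "(\<Sum>q\<in>Inl ` E. ?g q) = (\<Sum>e\<in>E. ?g (Inl e))" by (subst sum.reindex) auto
  also have "\<dots> = (\<Sum>e\<in>E. if src e = x \<and> tgt e = y then cis (t * \<alpha> e + s * of_int (\<tau> e 0)) else 0)"
    by (intro sum.cong refl) (simp add: ssrc_def stgt_def wT_def fq_def cis_mult)
  also have "\<dots> = (\<Sum>e\<in>{e\<in>E. src e = x \<and> tgt e = y}. cis (t * \<alpha> e + s * of_int (\<tau> e 0)))"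
    using fin by (simp add: sum.inter_filter)
  also have "(\<Sum>q\<in>Inr ` {..<\<nu>}. ?g q) = (\<Sum>z\<in>{..<\<nu>}. ?g (Inr z))" by (subst sum.reindex) auto
  also have "\<dots> = (\<Sum>z\<in>{..<\<nu>}. if z = x then (if x = y then complex_of_real (V x - real (degree_at E src x)) else 0) else 0)"
    by (intro sum.cong refl) (auto simp: ssrc_def stgt_def wT_def fq_def)
  also have "\<dots> = (if x = y then complex_of_real (V x - real (degree_at E src x)) else 0)"
    using x by (subst sum.delta) auto
  finally show ?thesis unfolding fiber_entry_raw[OF x y] using ks by simp
qed

lemma wprod_split:
  "prod_list (map (\<lambda>q. wT \<alpha> E src V t q * cis (s * of_int (fq \<tau> q))) qs)
   = prod_list (map (wT \<alpha> E src V t) qs) * cis (s * of_int (fr \<tau> qs))"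
  by (induction qs) (auto simp: fr_def cis_mult distrib_left mult_ac)

lemma wT_pure:
  "set qs \<subseteq> Inl ` E \<Longrightarrow> prod_list (map (wT \<alpha> E src V t) qs) = cis (t * aa \<alpha> qs)"
  by (induction qs) (auto simp: aa_def wT_def cis_mult distrib_left)

lemma fr_bound:
  "(\<And>q. q \<in> set qs \<Longrightarrow> \<bar>fq \<tau> q\<bar> \<le> B) \<Longrightarrow> \<bar>fr \<tau> qs\<bar> \<le> int (length qs) * B"
proof (induction qs)
  case Nil then show ?case by (simp add: fr_def)
next
  case (Cons q qs)
  then have "\<bar>fq \<tau> q\<bar> \<le> B" "\<bar>fr \<tau> qs\<bar> \<le> int (length qs) * B" by auto
  then show ?case by (simp add: fr_def algebra_simps)
qed

lemma lift_walk:
  assumes "(lift_adj d E src tgt \<tau>)\<^sup>*\<^sup>* u w"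
  shows "\<exists>qs. set qs \<subseteq> Inl ` E \<and> chain (ssrc src) (stgt tgt) (fst u) qs (fst w) \<and> snd w 0 = snd u 0 + fr \<tau> qs"
  using assms
proof (induction rule: rtranclp_induct)
  case base
  then show ?case by (intro exI[of _ "[]"]) (auto simp: fr_def)
next
  case (step w w')
  then obtain qs where qs: "set qs \<subseteq> Inl ` E" "chain (ssrc src) (stgt tgt) (fst u) qs (fst w)"
    "snd w 0 = snd u 0 + fr \<tau> qs" by blast
  from step(2) obtain e where e: "e \<in> E" "src e = fst w" "tgt e = fst w'" "\<And>i. snd w' i = snd w i + \<tau> e i"
    unfolding lift_adj_def by blast
  show ?case
    by (intro exI[of _ "qs @ [Inl e]"])
       (use qs e in \<open>auto simp: chain_snoc fr_def fq_def\<close>)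
qed

lemma roots_unity_sum:
  fixes N :: nat and n :: int
  assumes N: "N > 0" and n: "0 < \<bar>n\<bar>" "\<bar>n\<bar> < int N"
  shows "(\<Sum>j<N. cis (2 * pi * real j * of_int n / real N)) = 0"
proof -
  define z where "z = cis (2 * pi * of_int n / real N)"
  have zj: "cis (2 * pi * real j * of_int n / real N) = z ^ j" for j
  proof -
    have "z ^ j = cis (real j * (2 * pi * of_int n / real N))" unfolding z_def by (rule Complex.DeMoivre)
    also have "real j * (2 * pi * of_int n / real N) = 2 * pi * real j * of_int n / real N" by simp
    finally show ?thesis by simp
  qed
  have zN: "z ^ N = 1" unfolding z_def Complex.DeMoivre using N
    by (simp add: cis_multiple_2pi)
  have z1: "z \<noteq> 1"
  proof
    assume "z = 1"
    then have "cos (2 * pi * of_int n / real N) = 1" unfolding z_def by (metis cis.simps(1) one_complex.simps(1))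
    then obtain k :: int where k: "2 * pi * of_int n / real N = of_int k * 2 * pi"
      using cos_one_2pi_int by blast
    then have "of_int n = of_int k * real N" using N by (simp add: field_simps)
    then have "n = k * int N" by (metis of_int_eq_iff of_int_mult of_int_of_nat_eq)
    then have nk: "n = k * int N" .
    with n have "k \<noteq> 0" by auto
    then have "int N \<le> \<bar>k\<bar> * int N" using mult_right_mono[of 1 "\<bar>k\<bar>" "int N"] by simp
    moreover have "\<bar>n\<bar> = \<bar>k\<bar> * int N" using nk by (simp add: abs_mult)
    ultimately show False using n by linarith
  qed
  have "(\<Sum>j<N. cis (2 * pi * real j * of_int n / real N)) = (\<Sum>j<N. z ^ j)" by (simp add: zj)
  also have "\<dots> = (z ^ N - 1) / (z - 1)" using z1 by (rule geometric_sum)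
  also have "\<dots> = 0" using zN by simp
  finally show ?thesis .
qed

lemma dft_coeff_zero:
  fixes I :: "'i set" and c :: "'i \<Rightarrow> complex" and f :: "'i \<Rightarrow> int" and N :: nat and b :: int
  assumes fin: "finite I" and N: "N > 0" and b: "0 < \<bar>b\<bar>" "\<bar>b\<bar> < int N"
    and fb: "\<And>i. i \<in> I \<Longrightarrow> \<bar>f i - b\<bar> < int N"
    and const: "\<And>j. j < N \<Longrightarrow> (\<Sum>i\<in>I. c i * cis (2 * pi * real j * of_int (f i) / real N)) = (\<Sum>i\<in>I. c i)"
  shows "(\<Sum>i\<in>{i\<in>I. f i = b}. c i) = 0"
proof -
  define e where "e = (\<lambda>j n. cis (2 * pi * real j * of_int n / real N))"
  have emul: "e j n1 * e j n2 = e j (n1 + n2)" for j n1 n2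
    unfolding e_def by (simp add: cis_mult add_divide_distrib distrib_left)
  have "(\<Sum>j<N. (\<Sum>i\<in>I. c i * e j (f i)) * e j (-b)) = (\<Sum>j<N. (\<Sum>i\<in>I. c i) * e j (-b))"
    using const unfolding e_def by simp
  also have "\<dots> = (\<Sum>i\<in>I. c i) * (\<Sum>j<N. e j (-b))" by (simp add: sum_distrib_left)
  also have "(\<Sum>j<N. e j (-b)) = 0" unfolding e_def using roots_unity_sum[OF N, of "-b"] b by simp
  finally have X0: "(\<Sum>j<N. (\<Sum>i\<in>I. c i * e j (f i)) * e j (-b)) = 0" by simp
  have "(\<Sum>j<N. (\<Sum>i\<in>I. c i * e j (f i)) * e j (-b)) = (\<Sum>i\<in>I. c i * (\<Sum>j<N. e j (f i - b)))"
    by (simp add: sum_distrib_right sum_distrib_left mult.assoc emul sum.swap[of _ I])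
  also have "\<dots> = (\<Sum>i\<in>I. if f i = b then c i * of_nat N else 0)"
  proof (intro sum.cong refl)
    fix i assume i: "i \<in> I"
    show "c i * (\<Sum>j<N. e j (f i - b)) = (if f i = b then c i * of_nat N else 0)"
    proof (cases "f i = b")
      case True then show ?thesis unfolding e_def by simp
    next
      case False
      then have "(\<Sum>j<N. e j (f i - b)) = 0" unfolding e_def
        using roots_unity_sum[OF N, of "f i - b"] fb[OF i] by simp
      then show ?thesis using False by simp
    qed
  qed
  also have "\<dots> = (\<Sum>i\<in>{i\<in>I. f i = b}. c i) * of_nat N"
    using fin by (simp add: sum.inter_filter[symmetric] sum_distrib_right)
  finally show ?thesis using X0 N by simp
qed

lemma fr_filter: "fr \<tau> (filter isl qs) = fr \<tau> qs"
  by (induction qs) (auto simp: fr_def fq_def split: sum.splits)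

theorem proposition2p15:
  fixes d \<nu> :: nat and E :: "'e set" and src tgt :: "'e \<Rightarrow> nat" and rev_e :: "'e \<Rightarrow> 'e"
    and \<tau> :: "'e \<Rightarrow> nat \<Rightarrow> int" and \<alpha> :: "'e \<Rightarrow> real" and V :: "nat \<Rightarrow> real"
  assumes "d \<ge> 1"
    and "periodic_graph d \<nu> E src tgt rev_e \<tau>"
    and "lift_connected d \<nu> E src tgt \<tau>"
    and "magnetic_potential E rev_e \<alpha>"
  shows "finite {t \<in> {0..1::real}. ac_spectrum d \<nu> E src tgt \<tau> (\<lambda>e. t * \<alpha> e) V = {}}"
proof -
  note d = assms(1) and pg = assms(2) and lc = assms(3) and mp = assms(4)
  have fin: "finite E" and nu: "\<nu> \<ge> 1" and Ev: "\<And>e. e \<in> E \<Longrightarrow> src e < \<nu> \<and> tgt e < \<nu>"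
    using pg unfolding periodic_graph_def by auto
  let ?S = "Steps E \<nu>"
  let ?sr = "ssrc src"
  let ?tg = "stgt tgt"
  have finS: "finite ?S" using fin by (rule finite_Steps)
  have rng: "\<And>q. q \<in> ?S \<Longrightarrow> ?sr q < \<nu> \<and> ?tg q < \<nu>" using Ev by (auto simp: Steps_def)
  define z0 :: "nat \<Rightarrow> int" where "z0 = (\<lambda>_. 0)"
  define e0 :: "nat \<Rightarrow> int" where "e0 = (\<lambda>i. if i = 0 then 1 else 0)"
  have "lattice_pt d z0" "lattice_pt d e0" using d by (auto simp: lattice_pt_def z0_def e0_def)
  then have "(lift_adj d E src tgt \<tau>)\<^sup>*\<^sup>* (0, z0) (0, e0)" using lc nu unfolding lift_connected_def by auto
  from lift_walk[OF this] obtain qs1 where qs1: "set qs1 \<subseteq> Inl ` E" "chain ?sr ?tg 0 qs1 0" "fr \<tau> qs1 = 1"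
    by (auto simp: z0_def e0_def)
  define P where "P n = (\<exists>x<\<nu>. \<exists>qs\<in>Ls ?S n. chain ?sr ?tg x qs x \<and> fr \<tau> qs \<noteq> 0)" for n
  have "P (length qs1)" unfolding P_def using qs1 nu
    by (intro exI[of _ 0] conjI bexI[of _ qs1]) (auto simp: Ls_def Steps_def)
  define m where "m = (LEAST n. P n)"
  have "P m" unfolding m_def by (rule LeastI) fact
  then obtain x0 qs0 where x0: "x0 < \<nu>" "qs0 \<in> Ls ?S m" "chain ?sr ?tg x0 qs0 x0" "fr \<tau> qs0 \<noteq> 0"
    unfolding P_def by blast
  define b where "b = fr \<tau> qs0"
  have minimal: "set qs \<subseteq> Inl ` E" if x: "x < \<nu>" and qs: "qs \<in> Ls ?S m" and ch: "chain ?sr ?tg x qs x"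
    and nz: "fr \<tau> qs \<noteq> 0" for x qs
  proof (rule ccontr)
    assume "\<not> set qs \<subseteq> Inl ` E"
    then obtain q where q: "q \<in> set qs" "q \<notin> Inl ` E" by blast
    then have "\<not> isl q" using qs unfolding Ls_def Steps_def by auto
    then have lt: "length (filter isl qs) < m" using length_filter_less[OF q(1), of isl] qs unfolding Ls_def
      by simp
    have ch': "chain ?sr ?tg x (filter isl qs) x"
      by (rule chain_filter[OF _ ch]) (auto simp: ssrc_def stgt_def split: sum.splits)
    have "filter isl qs \<in> Ls ?S (length (filter isl qs))" using qs unfolding Ls_def by auto
    then have "P (length (filter isl qs))" unfolding P_def
      by (intro exI[of _ x] conjI bexI[of _ "filter isl qs"]) (use x ch' nz fr_filter[of \<tau> qs] in auto)
    then show False using not_less_Least[OF lt[unfolded m_def]] by blast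
  qed
  define G where "G = {p \<in> {..<\<nu>} \<times> Ls ?S m. chain ?sr ?tg (fst p) (snd p) (fst p) \<and> fr \<tau> (snd p) = b}"
  have "G \<subseteq> {..<\<nu>} \<times> Ls ?S m" unfolding G_def by blast
  moreover have "finite ({..<\<nu>} \<times> Ls ?S m)" using finite_Ls[OF finS] by blast
  ultimately have finG: "finite G" by (rule finite_subset)
  have "(x0, qs0) \<in> G" unfolding G_def b_def using x0 by simp
  then have neG: "G \<noteq> {}" by blast
  have fin0: "finite {t \<in> {0..1::real}. (\<Sum>p\<in>G. cis (t * aa \<alpha> (snd p))) = 0}"
    by (rule exp_sum_zeros_finite[OF finG neG])
  define B where "B = (\<Sum>e\<in>E. \<bar>\<tau> e 0\<bar>)"
  have B0: "B \<ge> 0" unfolding B_def by (rule sum_nonneg) simp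
  have fqB: "\<bar>fq \<tau> q\<bar> \<le> B" if q: "q \<in> ?S" for q
  proof -
    from q consider (l) e where "e \<in> E" "q = Inl e" | (r) y where "q = Inr y"
      unfolding Steps_def by blast
    then show ?thesis
    proof cases
      case l
      then show ?thesis unfolding fq_def B_def using member_le_sum[of e E "\<lambda>e. \<bar>\<tau> e 0\<bar>"] fin by simp
    next
      case r
      then show ?thesis using B0 unfolding fq_def by simp
    qed
  qed
  have frB: "\<bar>fr \<tau> qs\<bar> \<le> int m * B" if "qs \<in> Ls ?S m" for qs
  proof -
    have s: "set qs \<subseteq> ?S" and l: "length qs = m" using that unfolding Ls_def by auto
    have "\<bar>fr \<tau> qs\<bar> \<le> int (length qs) * B" by (rule fr_bound) (use s fqB in blast)
    then show ?thesis using l by simp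
  qed
  have mB0: "0 \<le> int m * B" using B0 by simp
  define N where "N = nat (2 * (int m * B) + 1)"
  have NN: "int N = 2 * (int m * B) + 1" unfolding N_def using mB0 by simp
  have Npos: "N > 0" using NN mB0 by linarith
  have b0: "\<bar>b\<bar> \<le> int m * B" unfolding b_def by (rule frB[OF x0(2)])
  have bb: "0 < \<bar>b\<bar>" "\<bar>b\<bar> < int N" using x0(4) b0 NN mB0 unfolding b_def by linarith+
  have fb: "\<bar>fr \<tau> qs - b\<bar> < int N" if "qs \<in> Ls ?S m" for qs
    using frB[OF that] b0 NN mB0 by linarith
  show ?thesis
  proof (rule finite_subset[OF _ fin0], rule subsetI)
    fix t assume "t \<in> {t \<in> {0..1::real}. ac_spectrum d \<nu> E src tgt \<tau> (\<lambda>e. t * \<alpha> e) V = {}}"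
    then have t01: "t \<in> {0..1}" and ac: "ac_spectrum d \<nu> E src tgt \<tau> (\<lambda>e. t * \<alpha> e) V = {}" by auto
    define Mk where "Mk = fiber_op d \<nu> E src tgt \<tau> (\<lambda>e. t * \<alpha> e) V"
    have flat: "\<not> (Inf ((\<lambda>k. fiber_eigenvalue (Mk k) j) ` UNIV) < Sup ((\<lambda>k. fiber_eigenvalue (Mk k) j) ` UNIV))"
      if j: "1 \<le> j" "j \<le> \<nu>" for j
    proof
      assume lt: "Inf ((\<lambda>k. fiber_eigenvalue (Mk k) j) ` UNIV) < Sup ((\<lambda>k. fiber_eigenvalue (Mk k) j) ` UNIV)"
      have "band d \<nu> E src tgt \<tau> (\<lambda>e. t * \<alpha> e) V j = (\<lambda>k. fiber_eigenvalue (Mk k) j) ` UNIV"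
        unfolding band_def Mk_def by simp
      then have "band d \<nu> E src tgt \<tau> (\<lambda>e. t * \<alpha> e) V j \<in> {band d \<nu> E src tgt \<tau> (\<lambda>e. t * \<alpha> e) V j' | j'. 1 \<le> j' \<and> j' \<le> \<nu> \<and>
          Inf (band d \<nu> E src tgt \<tau> (\<lambda>e. t * \<alpha> e) V j') < Sup (band d \<nu> E src tgt \<tau> (\<lambda>e. t * \<alpha> e) V j')}"
        using j lt by (intro CollectI exI[of _ j]) simp
      then have "band d \<nu> E src tgt \<tau> (\<lambda>e. t * \<alpha> e) V j \<subseteq> ac_spectrum d \<nu> E src tgt \<tau> (\<lambda>e. t * \<alpha> e) V"
        unfolding ac_spectrum_def by (rule Union_upper)
      moreover have "band d \<nu> E src tgt \<tau> (\<lambda>e. t * \<alpha> e) V j \<noteq> {}" unfolding band_def by simp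
      ultimately show False using ac by blast
    qed
    have car: "Mk k \<in> carrier_mat \<nu> \<nu>" for k unfolding Mk_def fiber_op_def by simp
    have ma: "t * \<alpha> (rev_e e) = - (t * \<alpha> e)" if "e \<in> E" for e
      using mp that unfolding magnetic_potential_def by simp
    have herm: "Mk k $$ (j,i) = cnj (Mk k $$ (i,j))" if "i < \<nu>" "j < \<nu>" for k i j
      unfolding Mk_def by (rule fiber_herm[where a="\<lambda>e. t * \<alpha> e", OF pg ma that])
    have bnd: "(\<Sum>j<\<nu>. cmod (Mk k $$ (i,j))) \<le> real \<nu> * (2 * real (card E) + (\<Sum>x<\<nu>. \<bar>V x\<bar>))"
      if "i < \<nu>" for k i
      unfolding Mk_def by (rule fiber_bnd[OF pg that])
    have tr: "mtr (Mk k ^\<^sub>m m) = mtr (Mk k' ^\<^sub>m m)" for k k'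
      by (rule flat_trace_const[OF car herm bnd flat])
    define kk where "kk s = (\<lambda>i::nat. if i = 0 then s else 0)" for s :: real
    define c where "c p = (if chain ?sr ?tg (fst p) (snd p) (fst p) then prod_list (map (wT \<alpha> E src V t) (snd p)) else 0)"
      for p :: "nat \<times> ('e + nat) list"
    define f where "f p = fr \<tau> (snd p)" for p :: "nat \<times> ('e + nat) list"
    define I where "I = {..<\<nu>} \<times> Ls ?S m"
    have finI: "finite I" unfolding I_def using finite_Ls[OF finS] by simp
    have g: "mtr (Mk (kk s) ^\<^sub>m m) = (\<Sum>p\<in>I. c p * cis (s * of_int (f p)))" for s
    proof -
      let ?w = "\<lambda>q. wT \<alpha> E src V t q * cis (s * of_int (fq \<tau> q))"
      have ent: "Mk (kk s) $$ (x,y) = (\<Sum>q\<in>?S. if ?sr q = x \<and> ?tg q = y then ?w q else 0)"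
        if "x < \<nu>" "y < \<nu>" for x y
        unfolding Mk_def kk_def by (rule fiber_entry_steps[OF fin d that])
      have "mtr (Mk (kk s) ^\<^sub>m m) = (\<Sum>x<\<nu>. (Mk (kk s) ^\<^sub>m m) $$ (x,x))"
      proof -
        have "dim_row (Mk (kk s)) = \<nu>" unfolding Mk_def fiber_op_def by simp
        then show ?thesis unfolding mtr_def by simp
      qed
      also have "\<dots> = (\<Sum>x<\<nu>. \<Sum>qs\<in>Ls ?S m. if chain ?sr ?tg x qs x then prod_list (map ?w qs) else 0)"
        by (rule trace_walks[OF car finS ent rng])
      also have "\<dots> = (\<Sum>x<\<nu>. \<Sum>qs\<in>Ls ?S m. c (x,qs) * cis (s * of_int (f (x,qs))))"
        unfolding c_def f_def by (intro sum.cong refl) (simp add: wprod_split)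
      also have "\<dots> = (\<Sum>p\<in>I. c p * cis (s * of_int (f p)))"
        unfolding I_def by (simp add: sum.cartesian_product case_prod_beta)
      finally show ?thesis .
    qed
    have "(\<Sum>p\<in>{p\<in>I. f p = b}. c p) = 0"
    proof (rule dft_coeff_zero[OF finI Npos bb])
      show "\<bar>f p - b\<bar> < int N" if "p \<in> I" for p using fb that unfolding I_def f_def by auto
      fix j assume "j < N"
      have "(\<Sum>p\<in>I. c p * cis (2 * pi * real j * of_int (f p) / real N))
          = mtr (Mk (kk (2 * pi * real j / real N)) ^\<^sub>m m)"
        unfolding g by (intro sum.cong refl) (simp add: field_simps)
      also have "\<dots> = mtr (Mk (kk 0) ^\<^sub>m m)" by (rule tr)
      also have "\<dots> = (\<Sum>p\<in>I. c p)" unfolding g by simp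
      finally show "(\<Sum>p\<in>I. c p * cis (2 * pi * real j * of_int (f p) / real N)) = (\<Sum>p\<in>I. c p)" .
    qed
    moreover have "(\<Sum>p\<in>{p\<in>I. f p = b}. c p) = (\<Sum>p\<in>G. cis (t * aa \<alpha> (snd p)))"
    proof -
      have "(\<Sum>p\<in>{p\<in>I. f p = b}. c p) = (\<Sum>p\<in>G. c p)"
        by (rule sum.mono_neutral_right) (use finI in \<open>auto simp: G_def I_def f_def c_def\<close>)
      also have "\<dots> = (\<Sum>p\<in>G. cis (t * aa \<alpha> (snd p)))"
      proof (intro sum.cong refl)
        fix p assume p: "p \<in> G"
        then have "set (snd p) \<subseteq> Inl ` E"
          using minimal[of "fst p" "snd p"] bb unfolding G_def by auto
        then show "c p = cis (t * aa \<alpha> (snd p))" using p unfolding c_def G_def by (simp add: wT_pure)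
      qed
      finally show ?thesis .
    qed
    ultimately show "t \<in> {t \<in> {0..1}. (\<Sum>p\<in>G. cis (t * aa \<alpha> (snd p))) = 0}" using t01 by simp
  qed
qed

end
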